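(* Let $k\ge2$ and $\ell\ge0$. Among all stable configurations reachable by labeled chip-firing from $k^\ell$ chips labeled $1,\dots,k^\ell$ at the root of the infinite rooted directed $k$-ary tree (viewed as permutations of $\{1,\dots,k^\ell\}$), the permutation $Z_k(\ell)$ has the maximum number of inversions, and this maximum number of inversions is $$\frac{k^{2\ell}-\ell k^{\ell+1}+(\ell-1)k^{\ell}}{4}.$$
   Context: Labeled chip-firing on the infinite rooted directed $k$-ary tree (each vertex has $k$ children ordered left to right, root on layer $1$): a vertex with at least $k$ chips may fire by choosing any $k$ of its chips and sending the $i$-th smallest label among them to its $i$-th leftmost child; a configuration is stable when no vertex has $\ge k$ chips. Starting with $k^\ell$ chips at the root, every stable configuration has exactly one chip on each vertex of layer $\ell+1$ and none elsewhere, and is identified with the permutation of labels read left to right on layer $\ell+1$. $Z_k(\ell)$ is the stable configuration obtained by the strategy in which every vertex on layers $1,\dots,\ell$, holding chips $c_1<\cdots<c_{kq}$, fires the $k$-tuples of consecutive chips $(c_1,\dots,c_k),(c_{k+1},\dots,c_{2k}),\dots$ in sorted order; equivalently, its $p$-th entry is $1+\mathrm{rev}_{k,\ell}(p-1)$, where $\mathrm{rev}_{k,\ell}$ reverses the $\ell$-digit (zero-padded) base-$k$ representation. An inversion of a permutation $\pi$ is a pair $i<j$ with $\pi_i>\pi_j$. *)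

theory Defs
  imports Complex_Main
begin

text \<open>Vertices of the infinite rooted k-ary tree are lists of child indices
  (each < k), the root being the empty list; vertex v lies on layer length v + 1,
  and its i-th leftmost child is v @ [i].\<close>

type_synonym config = "nat list \<Rightarrow> nat set"

definition initial_config :: "nat \<Rightarrow> nat \<Rightarrow> config" where
  "initial_config k l = (\<lambda>v. if v = [] then {1..k ^ l} else {})"

text \<open>One firing move: a vertex v holding at least k chips chooses k of its chips T
  and sends the i-th smallest label of T to its i-th leftmost child v @ [i].\<close>

definition fire :: "nat \<Rightarrow> config \<Rightarrow> config \<Rightarrow> bool" where
  "fire k c c' \<longleftrightarrow> (\<exists>v T. T \<subseteq> c v \<and> card T = k \<and>
     c' = (\<lambda>w. (if w = v then c v - T else c w) \<union>
                (if (\<exists>i<k. w = v @ [i]) then {sorted_list_of_set T ! last w} else {})))"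

definition stable :: "nat \<Rightarrow> config \<Rightarrow> bool" where
  "stable k c \<longleftrightarrow> (\<forall>v. card (c v) < k)"

text \<open>The vertex on layer l+1 at (0-based) position p, counted from the left:
  its child indices are the l base-k digits of p, most significant first.\<close>

definition vertex_at :: "nat \<Rightarrow> nat \<Rightarrow> nat \<Rightarrow> nat list" where
  "vertex_at k l p = map (\<lambda>i. p div k ^ (l - 1 - i) mod k) [0..<l]"

text \<open>The permutation read left to right on layer l+1 of a stable configuration
  (each such vertex holds exactly one chip).\<close>

definition perm_of :: "nat \<Rightarrow> nat \<Rightarrow> config \<Rightarrow> nat list" where
  "perm_of k l c = map (\<lambda>p. the_elem (c (vertex_at k l p))) [0..<k ^ l]"

definition inversions :: "nat list \<Rightarrow> nat" where
  "inversions xs = card {(i, j). i < j \<and> j < length xs \<and> xs ! i > xs ! j}"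

definition rev_digits :: "nat \<Rightarrow> nat \<Rightarrow> nat \<Rightarrow> nat" where
  "rev_digits k l p = (\<Sum>i<l. (p div k ^ i mod k) * k ^ (l - 1 - i))"

definition Z :: "nat \<Rightarrow> nat \<Rightarrow> nat list" where
  "Z k l = map (\<lambda>p. 1 + rev_digits k l p) [0..<k ^ l]"

definition stable_reachable :: "nat \<Rightarrow> nat \<Rightarrow> config \<Rightarrow> bool" where
  "stable_reachable k l c \<longleftrightarrow> (fire k)\<^sup>*\<^sup>* (initial_config k l) c \<and> stable k c"

end

theory Submission
  imports Defs
begin

lemma rev_digits_Suc:
  "rev_digits k (Suc l) p = (p mod k) * k ^ l + rev_digits k l (p div k)"
proof -
  have "rev_digits k (Suc l) p = (\<Sum>i<Suc l. (p div k ^ i mod k) * k ^ (l - i))"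
    by (simp add: rev_digits_def)
  also have "\<dots> = (p mod k) * k ^ l + (\<Sum>i<l. (p div k ^ Suc i mod k) * k ^ (l - Suc i))"
    by (subst sum.lessThan_Suc_shift) simp
  also have "(\<Sum>i<l. (p div k ^ Suc i mod k) * k ^ (l - Suc i)) = rev_digits k l (p div k)"
    unfolding rev_digits_def
    by (rule sum.cong) (auto simp: div_mult2_eq mult.commute)
  finally show ?thesis .
qed

lemma rev_digits_less: "k \<ge> 1 \<Longrightarrow> rev_digits k l p < k ^ l"
proof (induction l arbitrary: p)
  case 0 then show ?case by (simp add: rev_digits_def)
next
  case (Suc l)
  have a: "p mod k \<le> k - 1" using mod_less_divisor[of k p] Suc.prems by linarith
  have b: "rev_digits k l (p div k) < k ^ l" using Suc by blast
  have "(p mod k) * k ^ l \<le> (k - 1) * k ^ l" using a by simp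
  then have "(p mod k) * k ^ l + rev_digits k l (p div k) < (k - 1) * k ^ l + k ^ l" using b by linarith
  also have "\<dots> = k ^ Suc l" using Suc.prems by (cases k) auto
  finally show ?case by (simp add: rev_digits_Suc)
qed

definition P2S :: "nat \<Rightarrow> (nat \<times> nat) set" where
  "P2S n = {(a, b). a < b \<and> b < n}"

lemma P2S_finite: "finite (P2S n)"
  by (rule finite_subset[of _ "{..<n} \<times> {..<n}"]) (auto simp: P2S_def)

lemma card_P2S: "card (P2S n) = n choose 2"
proof (induction n)
  case 0 then show ?case by (simp add: P2S_def)
next
  case (Suc n)
  have e: "P2S (Suc n) = P2S n \<union> (\<lambda>a. (a, n)) ` {..<n}"
    by (auto simp: P2S_def less_Suc_eq)
  have d: "P2S n \<inter> (\<lambda>a. (a, n)) ` {..<n} = {}" by (auto simp: P2S_def)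
  have "card (P2S (Suc n)) = card (P2S n) + card ((\<lambda>a. (a, n)) ` {..<n})"
    unfolding e by (rule card_Un_disjoint) (use d P2S_finite in auto)
  also have "card ((\<lambda>a. (a, n)) ` {..<n}) = n" by (subst card_image) (auto simp: inj_on_def)
  finally show ?case using Suc by (simp add: numeral_2_eq_2)
qed

definition IZ :: "nat \<Rightarrow> nat \<Rightarrow> (nat \<times> nat) set" where
  "IZ k l = {(i, j). i < j \<and> j < k ^ l \<and> rev_digits k l j < rev_digits k l i}"

lemma inversions_Z: "inversions (Z k l) = card (IZ k l)"
  unfolding inversions_def Z_def IZ_def
  by (rule arg_cong[where f=card]) auto

lemma IZ_finite: "finite (IZ k l)"
  by (rule finite_subset[of _ "{..<k^l} \<times> {..<k^l}"]) (auto simp: IZ_def)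

lemma card_IZ_Suc:
  assumes k: "k \<ge> 1"
  shows "card (IZ k (Suc l)) = k * card (IZ k l) + (k choose 2) * (k ^ l choose 2)"
proof -
  let ?R = "rev_digits k l"
  let ?fA = "\<lambda>(r, (q, q')). (q * k + r, q' * k + r)"
  let ?fB = "\<lambda>((q, q'), (r', r)). (q * k + r, q' * k + r')"
  let ?A = "?fA ` ({..<k} \<times> IZ k l)"
  let ?B = "?fB ` (P2S (k ^ l) \<times> P2S k)"
  have Rl: "\<And>p. ?R p < k ^ l" using rev_digits_less k by blast
  have key: "\<And>a b x y. a < k \<Longrightarrow> b < k \<Longrightarrow> x < k ^ l \<Longrightarrow> y < k ^ l \<Longrightarrow>
       (a * k ^ l + x < b * k ^ l + y) \<longleftrightarrow> (a < b \<or> (a = b \<and> x < y))"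
  proof -
    fix a b x y :: nat assume "x < k ^ l" "y < k ^ l"
    show "(a * k ^ l + x < b * k ^ l + y) \<longleftrightarrow> (a < b \<or> (a = b \<and> x < y))"
    proof (cases a b rule: linorder_cases)
      case less
      then have "a * k ^ l + x < (a + 1) * k ^ l" using \<open>x < k^l\<close> by simp
      also have "\<dots> \<le> b * k ^ l" using less by (intro mult_right_mono) auto
      finally show ?thesis using less by simp
    next
      case greater
      then have "b * k ^ l + y < (b + 1) * k ^ l" using \<open>y < k^l\<close> by simp
      also have "\<dots> \<le> a * k ^ l" using greater by (intro mult_right_mono) auto
      finally show ?thesis using greater by simp
    qed auto
  qed
  have kp: "k > 0" using k by simp
  have divmod: "\<And>q r. r < k \<Longrightarrow> (q * k + r) div k = q \<and> (q * k + r) mod k = r"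
    using kp by simp
  have RS: "\<And>q r. r < k \<Longrightarrow> rev_digits k (Suc l) (q * k + r) = r * k ^ l + ?R q"
    using divmod by (simp add: rev_digits_Suc)
  have sub: "IZ k (Suc l) \<subseteq> ?A \<union> ?B"
  proof
    fix ij assume "ij \<in> IZ k (Suc l)"
    then obtain i j where ij: "ij = (i, j)" "i < j" "j < k ^ Suc l"
      "rev_digits k (Suc l) j < rev_digits k (Suc l) i" by (auto simp: IZ_def)
    define q where "q = i div k" define r where "r = i mod k"
    define q' where "q' = j div k" define r' where "r' = j mod k"
    have i: "i = q * k + r" and j: "j = q' * k + r'" by (simp_all add: q_def r_def q'_def r'_def)
    have rk: "r < k" "r' < k" using kp by (simp_all add: r_def r'_def)
    have qq: "q \<le> q'" using ij(2) by (simp add: q_def q'_def div_le_mono)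
    have q'l: "q' < k ^ l" using ij(3) kp by (simp add: q'_def less_mult_imp_div_less mult.commute)
    have ql: "q < k ^ l" using qq q'l by simp
    have inv: "r' * k ^ l + ?R q' < r * k ^ l + ?R q" using ij(4) RS rk i j by simp
    hence inv2: "r' < r \<or> (r' = r \<and> ?R q' < ?R q)" using key[OF rk(2) rk(1) Rl Rl] by blast
    show "ij \<in> ?A \<union> ?B"
    proof (cases "r = r'")
      case True
      then have "q < q'" using ij(2) i j qq by (cases "q = q'") auto
      then have "(r, (q, q')) \<in> {..<k} \<times> IZ k l" using True inv2 rk q'l by (auto simp: IZ_def)
      then have "?fA (r, (q, q')) \<in> ?A" by blast
      then show ?thesis using ij(1) i j True by simp
    next
      case False
      then have "r' < r" using inv2 by auto
      then have "q < q'" using ij(2) i j qq by (cases "q = q'") auto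
      then have "((q, q'), (r', r)) \<in> P2S (k ^ l) \<times> P2S k" using \<open>r' < r\<close> rk q'l by (auto simp: P2S_def)
      then have "?fB ((q, q'), (r', r)) \<in> ?B" by blast
      then show ?thesis using ij(1) i j by simp
    qed
  qed
  have lt: "\<And>q q' r r'. q < q' \<Longrightarrow> r < k \<Longrightarrow> r' < k \<Longrightarrow> q * k + r < q' * k + r'"
  proof -
    fix q q' r r' :: nat assume "q < q'" "r < k" "r' < k"
    have "q * k + r < (q + 1) * k" using \<open>r < k\<close> by simp
    also have "\<dots> \<le> q' * k" using \<open>q < q'\<close> by (intro mult_right_mono) auto
    finally show "q * k + r < q' * k + r'" by simp
  qed
  have bnd: "\<And>q r. q < k ^ l \<Longrightarrow> r < k \<Longrightarrow> q * k + r < k ^ Suc l"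
  proof -
    fix q r :: nat assume "q < k ^ l" "r < k"
    have "q * k + r < (q + 1) * k" using \<open>r < k\<close> by simp
    also have "\<dots> \<le> k ^ l * k" using \<open>q < k^l\<close> by (intro mult_right_mono) auto
    finally show "q * k + r < k ^ Suc l" by (simp add: mult.commute)
  qed
  have subA: "?A \<subseteq> IZ k (Suc l)"
  proof
    fix x assume "x \<in> ?A"
    then obtain r q q' where x: "x = (q * k + r, q' * k + r)" "r < k" "q < q'" "q' < k ^ l" "?R q' < ?R q"
      by (auto simp: IZ_def)
    then show "x \<in> IZ k (Suc l)" using lt bnd RS by (auto simp: IZ_def)
  qed
  have subB: "?B \<subseteq> IZ k (Suc l)"
  proof
    fix x assume "x \<in> ?B"
    then obtain r r' q q' where x: "x = (q * k + r, q' * k + r')" "r' < r" "r < k" "q < q'" "q' < k ^ l"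
      by (auto simp: P2S_def)
    have "r' * k ^ l + ?R q' < r * k ^ l + ?R q" using key[OF _ x(3) Rl Rl, of r'] x by simp
    then show "x \<in> IZ k (Suc l)" using x lt bnd RS[of r'] RS[of r] by (auto simp: IZ_def)
  qed
  have eq: "IZ k (Suc l) = ?A \<union> ?B" using sub subA subB by blast
  have disj: "?A \<inter> ?B = {}"
  proof -
    { fix x assume "x \<in> ?A" "x \<in> ?B"
      then obtain r q q' where xa: "x = (q * k + r, q' * k + r)" "r < k" by auto
      from \<open>x \<in> ?B\<close> obtain r1 r1' q1 q1' where xb: "x = (q1 * k + r1, q1' * k + r1')" "r1' < r1" "r1 < k"
        by (auto simp: P2S_def)
      have "r = r1" using xa xb divmod by (metis fst_conv)
      moreover have "r = r1'" using xa xb divmod by (metis snd_conv order.strict_trans)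
      ultimately have False using xb by simp }
    then show ?thesis by blast
  qed
  have injA: "inj_on ?fA ({..<k} \<times> IZ k l)"
    by (rule inj_onI) (auto, (metis divmod)+)
  have injB: "inj_on ?fB (P2S (k ^ l) \<times> P2S k)"
    by (rule inj_onI) (auto simp: P2S_def, (metis divmod order.strict_trans)+)
  have "card (IZ k (Suc l)) = card ?A + card ?B"
    unfolding eq by (rule card_Un_disjoint) (use disj IZ_finite P2S_finite in auto)
  also have "card ?A = k * card (IZ k l)"
    by (subst card_image[OF injA]) (simp add: card_cartesian_product)
  also have "card ?B = (k choose 2) * (k ^ l choose 2)"
    by (subst card_image[OF injB]) (simp add: card_cartesian_product card_P2S)
  finally show ?thesis .
qed

definition W :: "nat \<Rightarrow> nat \<Rightarrow> nat" where
  "W k l = (\<Sum>d<l. k ^ d * (k choose 2) * (k ^ (l - 1 - d) choose 2))"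

lemma W_Suc: "W k (Suc l) = k * W k l + (k choose 2) * (k ^ l choose 2)"
proof -
  have "W k (Suc l) = (k choose 2) * (k ^ l choose 2) + (\<Sum>d<l. k ^ Suc d * (k choose 2) * (k ^ (l - Suc d) choose 2))"
    unfolding W_def by (subst sum.lessThan_Suc_shift) simp
  also have "(\<Sum>d<l. k ^ Suc d * (k choose 2) * (k ^ (l - Suc d) choose 2)) = k * W k l"
    unfolding W_def sum_distrib_left by (rule sum.cong) auto
  finally show ?thesis by simp
qed

lemma card_IZ_W: "k \<ge> 1 \<Longrightarrow> card (IZ k l) = W k l"
proof (induction l)
  case 0
  have "IZ k 0 = {}" by (auto simp: IZ_def)
  then show ?case by (simp add: W_def)
next
  case (Suc l) then show ?case by (simp add: card_IZ_Suc W_Suc)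
qed

lemma real_choose2: "real (n choose 2) = real n * (real n - 1) / 2"
proof -
  have ev: "even (n * (n - 1))" by (cases "even n") auto
  have "2 * (n choose 2) = n * (n - 1)"
    using ev by (simp add: choose_two)
  then have "2 * real (n choose 2) = real n * real (n - 1)" by (metis of_nat_mult of_nat_numeral)
  then show ?thesis by (cases n) auto
qed

lemma W_real: "real (W k l) =
   (real k ^ (2 * l) - real l * real k ^ (l + 1) + (real l - 1) * real k ^ l) / 4"
proof (induction l)
  case 0 then show ?case by (simp add: W_def)
next
  case (Suc l)
  have "real (W k (Suc l)) = real k * real (W k l) + real (k choose 2) * real (k ^ l choose 2)"
    by (simp add: W_Suc)
  also have "\<dots> = real k * ((real k ^ (2 * l) - real l * real k ^ (l + 1) + (real l - 1) * real k ^ l) / 4)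
      + (real k * (real k - 1) / 2) * (real k ^ l * (real k ^ l - 1) / 2)"
    by (simp add: Suc real_choose2)
  also have "\<dots> = (real k ^ (2 * Suc l) - real (Suc l) * real k ^ (Suc l + 1) + (real (Suc l) - 1) * real k ^ Suc l) / 4"
  proof -
    have a: "real k ^ (2 * l) = real k ^ l * real k ^ l" by (simp add: mult_2 power_add)
    have b: "real k ^ (2 * Suc l) = real k ^ l * real k ^ l * real k * real k" by (simp add: mult_2 power_add)
    show ?thesis unfolding a b by (simp add: field_simps)
  qed
  finally show ?case .
qed

lemma sls_set: "sorted_wrt (<) ys \<Longrightarrow> sorted_list_of_set (set ys) = ys"
  using sorted_list_of_set_unique[of "set ys" ys]
  by (simp add: strict_sorted_iff distinct_card)

fun val :: "nat \<Rightarrow> nat list \<Rightarrow> nat" where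
  "val k [] = 0"
| "val k (a # v) = a + k * val k v"

lemma val_snoc: "val k (v @ [i]) = val k v + i * k ^ length v"
  by (induction v) (auto simp: algebra_simps)

lemma val_less: "set v \<subseteq> {..<k} \<Longrightarrow> val k v < k ^ length v"
proof (induction v)
  case Nil then show ?case by simp
next
  case (Cons a v)
  then have a: "a < k" and b: "val k v < k ^ length v" by auto
  have "a + k * val k v < k + k * val k v" using a by simp
  also have "\<dots> = k * (val k v + 1)" by simp
  also have "\<dots> \<le> k * k ^ length v" using b by (intro mult_left_mono) auto
  finally show ?case by simp
qed

lemma vertex_at_Suc: "vertex_at k (Suc l) p = (p div k ^ l mod k) # vertex_at k l p"
  unfolding vertex_at_def by (simp add: upt_conv_Cons map_Suc_upt[symmetric] del: upt_Suc)

lemma vertex_at_len: "length (vertex_at k l p) = l"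
  by (simp add: vertex_at_def)

lemma vertex_at_set: "k > 0 \<Longrightarrow> set (vertex_at k l p) \<subseteq> {..<k}"
  by (auto simp: vertex_at_def)

lemma val_vertex_at: "val k (vertex_at k l p) = rev_digits k l p"
proof (induction l)
  case 0 then show ?case by (simp add: vertex_at_def rev_digits_def)
next
  case (Suc l)
  have "rev_digits k (Suc l) p = (\<Sum>i<l. (p div k ^ i mod k) * k ^ (l - i)) + (p div k ^ l mod k)"
    by (simp add: rev_digits_def)
  also have "(\<Sum>i<l. (p div k ^ i mod k) * k ^ (l - i)) = k * rev_digits k l p"
    unfolding rev_digits_def sum_distrib_left
    by (rule sum.cong) (auto simp: Suc_diff_Suc simp flip: power_Suc)
  finally show ?case by (simp add: vertex_at_Suc Suc)
qed

lemma S_image: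
  fixes b K M N :: nat
  assumes "b < K" "K * M = N"
  shows "{x \<in> {1..N}. (x - 1) mod K = b} = (\<lambda>g. 1 + b + g * K) ` {..<M}"
proof
  show "(\<lambda>g. 1 + b + g * K) ` {..<M} \<subseteq> {x \<in> {1..N}. (x - 1) mod K = b}"
  proof
    fix x assume "x \<in> (\<lambda>g. 1 + b + g * K) ` {..<M}"
    then obtain g where g: "g < M" "x = 1 + b + g * K" by auto
    have "b + g * K < K + g * K" using assms(1) by simp
    also have "\<dots> = (g + 1) * K" by simp
    also have "\<dots> \<le> M * K" using g by (intro mult_right_mono) auto
    finally have "x \<le> N" using g assms(2) by (simp add: mult.commute)
    moreover have "(x - 1) mod K = b" using g assms(1) by simp
    ultimately show "x \<in> {x \<in> {1..N}. (x - 1) mod K = b}" using g by simp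
  qed
next
  show "{x \<in> {1..N}. (x - 1) mod K = b} \<subseteq> (\<lambda>g. 1 + b + g * K) ` {..<M}"
  proof
    fix x assume x: "x \<in> {x \<in> {1..N}. (x - 1) mod K = b}"
    define g where "g = (x - 1) div K"
    have "x - 1 = b + g * K" using x div_mult_mod_eq[of "x - 1" K] by (simp add: g_def)
    then have e: "x = 1 + b + g * K" using x by auto
    have "x - 1 < K * M" using x assms(2) by auto
    then have "g < M" unfolding g_def by (metis less_mult_imp_div_less mult.commute)
    then show "x \<in> (\<lambda>g. 1 + b + g * K) ` {..<M}" using e by blast
  qed
qed

lemma Diff_Diff_Un: "A - B - C = A - (B \<union> C)" by blast

lemma fire_list:
  assumes "sorted_wrt (<) xs" "length xs = k * q" "set xs \<subseteq> c v" "k > 0"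
  shows "(fire k)\<^sup>*\<^sup>* c (\<lambda>w. (if w = v then c v - set xs else c w) \<union>
            (if \<exists>i<k. w = v @ [i] then {xs ! (g * k + last w) | g. g < q} else {}))"
  using assms
proof (induction q arbitrary: xs c)
  case 0
  then have "xs = []" by simp
  have e: "\<And>w. {xs ! (g * k + last w) | g. g < (0::nat)} = {}" by simp
  have "(\<lambda>w. (if w = v then c v - set xs else c w) \<union>
            (if \<exists>i<k. w = v @ [i] then {xs ! (g * k + last w) | g. g < 0} else {})) = c"
    unfolding e using \<open>xs = []\<close> by (intro ext) simp
  then show ?case by simp
next
  case (Suc q)
  let ?T = "set (take k xs)"
  let ?ys = "drop k xs"
  have lenk: "length (take k xs) = k" using Suc.prems by simp
  have sT: "sorted_list_of_set ?T = take k xs"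
    by (rule sls_set) (use Suc.prems(1) sorted_wrt_take in blast)
  have dist: "distinct xs" using Suc.prems(1) strict_sorted_iff by blast
  have cardT: "card ?T = k" using lenk dist by (simp add: distinct_card)
  define c1 where "c1 = (\<lambda>w. (if w = v then c v - ?T else c w) \<union>
                (if (\<exists>i<k. w = v @ [i]) then {sorted_list_of_set ?T ! last w} else {}))"
  have f1: "fire k c c1"
    unfolding fire_def c1_def using Suc.prems(3) cardT
    by (intro exI[of _ v] exI[of _ ?T]) (auto dest: in_set_takeD)
  have disj: "set ?ys \<inter> ?T = {}" using dist
    by (metis append_take_drop_id distinct_append inf_commute)
  have c1v: "c1 v = c v - ?T" by (simp add: c1_def)
  have ys: "sorted_wrt (<) ?ys" "length ?ys = k * q" "set ?ys \<subseteq> c1 v"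
    using Suc.prems disj sorted_wrt_drop c1v by (auto dest: in_set_dropD)
  have IH: "(fire k)\<^sup>*\<^sup>* c1 (\<lambda>w. (if w = v then c1 v - set ?ys else c1 w) \<union>
            (if \<exists>i<k. w = v @ [i] then {?ys ! (g * k + last w) | g. g < q} else {}))"
    using Suc.IH[of ?ys c1] ys Suc.prems(4) by blast
  have eqf: "(\<lambda>w. (if w = v then c1 v - set ?ys else c1 w) \<union>
            (if \<exists>i<k. w = v @ [i] then {?ys ! (g * k + last w) | g. g < q} else {})) =
        (\<lambda>w. (if w = v then c v - set xs else c w) \<union>
            (if \<exists>i<k. w = v @ [i] then {xs ! (g * k + last w) | g. g < Suc q} else {}))"
  proof
    fix w
    show "(if w = v then c1 v - set ?ys else c1 w) \<union>
            (if \<exists>i<k. w = v @ [i] then {?ys ! (g * k + last w) | g. g < q} else {}) =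
        (if w = v then c v - set xs else c w) \<union>
            (if \<exists>i<k. w = v @ [i] then {xs ! (g * k + last w) | g. g < Suc q} else {})"
    proof (cases "\<exists>i<k. w = v @ [i]")
      case True
      then obtain i where i: "i < k" "w = v @ [i]" by blast
      have seq: "{xs ! (g * k + i) | g. g < Suc q} = {xs ! i} \<union> {?ys ! (g * k + i) | g. g < q}"
      proof -
        have "{xs ! (g * k + i) | g. g < Suc q} = (\<lambda>g. xs ! (g * k + i)) ` {..<Suc q}" by auto
        also have "{..<Suc q} = insert 0 (Suc ` {..<q})" by (auto simp: lessThan_Suc_eq_insert_0)
        also have "(\<lambda>g. xs ! (g * k + i)) ` insert 0 (Suc ` {..<q}) = {xs ! i} \<union> (\<lambda>g. ?ys ! (g * k + i)) ` {..<q}"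
          using Suc.prems(2) by (auto simp: image_image add.commute add.left_commute)
        finally show ?thesis by auto
      qed
      have c1w: "c1 w = c w \<union> {xs ! i}" using i sT lenk by (auto simp: c1_def)
      have wv: "w \<noteq> v" using i by simp
      have lw: "last w = i" using i by simp
      show ?thesis unfolding if_not_P[OF wv] if_P[OF True] lw c1w seq by blast
    next
      case False
      have setx: "set xs = ?T \<union> set ?ys" by (metis append_take_drop_id set_append)
      have R1: "c1 v - set ?ys = c v - set xs" by (simp only: c1v setx Diff_Diff_Un)
      have R2: "w \<noteq> v \<Longrightarrow> c1 w = c w" unfolding c1_def using False by simp blast
      show ?thesis unfolding if_not_P[OF False] using R1 R2 by (cases "w = v") simp_all
    qed
  qed
  show ?case using converse_rtranclp_into_rtranclp[OF f1 IH] unfolding eqf .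
qed

definition SS :: "nat \<Rightarrow> nat \<Rightarrow> nat list \<Rightarrow> nat set" where
  "SS k l w = {x \<in> {1..k ^ l}. (x - 1) mod k ^ length w = val k w}"

definition CC :: "nat \<Rightarrow> nat \<Rightarrow> nat \<Rightarrow> config" where
  "CC k l d w = (if length w = d \<and> set w \<subseteq> {..<k} then SS k l w else {})"

definition DD :: "nat \<Rightarrow> nat \<Rightarrow> nat \<Rightarrow> nat list set \<Rightarrow> config" where
  "DD k l d P w = (if length w = d \<and> set w \<subseteq> {..<k} \<and> w \<notin> P then SS k l w else {}) \<union>
                  (if length w = Suc d \<and> set w \<subseteq> {..<k} \<and> butlast w \<in> P then SS k l w else {})"

lemma SS_img:
  assumes "set w \<subseteq> {..<k}" "length w \<le> l"
  shows "SS k l w = (\<lambda>g. 1 + val k w + g * k ^ length w) ` {..<k ^ (l - length w)}"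
proof -
  have "k ^ length w * k ^ (l - length w) = k ^ l" using assms(2) by (simp flip: power_add)
  then show ?thesis unfolding SS_def using S_image[OF val_less[OF assms(1)]] by blast
qed

lemma DD_step:
  assumes k: "k > 0" and d: "d < l" and v: "length v = d" "set v \<subseteq> {..<k}" "v \<notin> P"
  shows "(fire k)\<^sup>*\<^sup>* (DD k l d P) (DD k l d (insert v P))"
proof -
  define q where "q = k ^ (l - Suc d)"
  define xs where "xs = map (\<lambda>r. 1 + val k v + r * k ^ d) [0..<k ^ (l - d)]"
  have ld: "l - d = Suc (l - Suc d)" using d by simp
  have len: "length xs = k * q" by (simp add: xs_def q_def ld)
  have kd: "k ^ d > 0" using k by simp
  have sorted: "sorted_wrt (<) xs"
    unfolding sorted_wrt_iff_nth_less xs_def using kd by auto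
  have vl: "length v \<le> l" using v(1) d by simp
  have setxs: "set xs = SS k l v"
    unfolding xs_def SS_img[OF v(2) vl] using v(1) by (simp add: atLeast0LessThan)
  have DDv: "DD k l d P v = SS k l v" using v by (simp add: DD_def)
  have sub: "set xs \<subseteq> DD k l d P v" using setxs DDv by simp
  have F: "(fire k)\<^sup>*\<^sup>* (DD k l d P) (\<lambda>w. (if w = v then DD k l d P v - set xs else DD k l d P w) \<union>
            (if \<exists>i<k. w = v @ [i] then {xs ! (g * k + last w) | g. g < q} else {}))"
    using fire_list[of xs k q "DD k l d P" v] sorted len sub k by blast
  have eq: "(\<lambda>w. (if w = v then DD k l d P v - set xs else DD k l d P w) \<union>
            (if \<exists>i<k. w = v @ [i] then {xs ! (g * k + last w) | g. g < q} else {})) = DD k l d (insert v P)"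
  proof
    fix w
    show "(if w = v then DD k l d P v - set xs else DD k l d P w) \<union>
            (if \<exists>i<k. w = v @ [i] then {xs ! (g * k + last w) | g. g < q} else {}) = DD k l d (insert v P) w"
    proof (cases "\<exists>i<k. w = v @ [i]")
      case True
      then obtain i where i: "i < k" "w = v @ [i]" by blast
      have wv: "w \<noteq> v" using i by simp
      have lw: "last w = i" using i by simp
      have vw: "set w \<subseteq> {..<k}" using i v by auto
      have D1: "DD k l d P w = {}" using i v by (simp add: DD_def)
      have D2: "DD k l d (insert v P) w = SS k l w" using i v vw by (simp add: DD_def)
      have S2: "SS k l w = (\<lambda>g. 1 + val k w + g * k ^ Suc d) ` {..<q}"
      proof -
        have lw2: "length w = Suc d" using i v by simp
        then have "length w \<le> l" using d by simp
        from SS_img[OF vw this] show ?thesis by (simp add: q_def lw2)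
      qed
      have "{xs ! (g * k + i) | g. g < q} = (\<lambda>g. 1 + val k w + g * k ^ Suc d) ` {..<q}"
      proof -
        have "\<And>g. g < q \<Longrightarrow> g * k + i < k ^ (l - d)"
        proof -
          fix g assume "g < q"
          have "g * k + i < g * k + k" using i by simp
          also have "\<dots> = (g + 1) * k" by simp
          also have "\<dots> \<le> q * k" using \<open>g < q\<close> by (intro mult_right_mono) auto
          finally show "g * k + i < k ^ (l - d)" by (simp add: ld q_def mult.commute)
        qed
        then have "\<And>g. g < q \<Longrightarrow> xs ! (g * k + i) = 1 + val k w + g * k ^ Suc d"
          using i v by (simp add: xs_def val_snoc algebra_simps)
        then show ?thesis by (auto intro!: image_eqI) (metis)
      qed
      then show ?thesis unfolding if_not_P[OF wv] if_P[OF True] lw D1 D2 S2 by simp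
    next
      case False
      show ?thesis
      proof (cases "w = v")
        case True
        then show ?thesis using False setxs DDv v(1) by (simp add: DD_def)
      next
        case wv: False
        have "DD k l d P w = DD k l d (insert v P) w"
        proof -
          have "\<not> (length w = Suc d \<and> set w \<subseteq> {..<k} \<and> butlast w = v)"
          proof
            assume a: "length w = Suc d \<and> set w \<subseteq> {..<k} \<and> butlast w = v"
            then have "w \<noteq> []" by auto
            then have "w = v @ [last w]" using a by (metis append_butlast_last_id)
            moreover have "last w < k" using a last_in_set[OF \<open>w \<noteq> []\<close>] by auto
            ultimately show False using False by blast
          qed
          then show ?thesis using wv by (auto simp: DD_def)
        qed
        then show ?thesis unfolding if_not_P[OF False] if_not_P[OF wv] by simp
      qed
    qed
  qed
  show ?thesis using F unfolding eq .
qed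

lemma CC_step:
  assumes k: "k > 0" and d: "d < l"
  shows "(fire k)\<^sup>*\<^sup>* (CC k l d) (CC k l (Suc d))"
proof -
  let ?V = "{w. set w \<subseteq> {..<k} \<and> length w = d}"
  have finV: "finite ?V" by (rule finite_lists_length_eq) simp
  have "\<And>P. finite P \<Longrightarrow> P \<subseteq> ?V \<Longrightarrow> (fire k)\<^sup>*\<^sup>* (DD k l d {}) (DD k l d P)"
  proof -
    fix P :: "nat list set" assume "finite P" "P \<subseteq> ?V"
    then show "(fire k)\<^sup>*\<^sup>* (DD k l d {}) (DD k l d P)"
    proof (induction rule: finite_subset_induct)
      case empty then show ?case by simp
    next
      case (insert a F)
      then show ?case using DD_step[OF k d, of a F] by auto
    qed
  qed
  then have R: "(fire k)\<^sup>*\<^sup>* (DD k l d {}) (DD k l d ?V)" using finV by blast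
  have e1: "DD k l d {} = CC k l d" by (rule ext) (simp add: DD_def CC_def)
  have e2: "DD k l d ?V = CC k l (Suc d)"
  proof
    fix w
    show "DD k l d ?V w = CC k l (Suc d) w"
    proof (cases "length w = Suc d \<and> set w \<subseteq> {..<k}")
      case True
      then have "butlast w \<in> ?V" by (auto dest: in_set_butlastD)
      then show ?thesis using True by (simp add: DD_def CC_def)
    next
      case False
      then show ?thesis by (auto simp: DD_def CC_def)
    qed
  qed
  show ?thesis using R unfolding e1 e2 .
qed

lemma CC_reach:
  assumes k: "k > 0"
  shows "d \<le> l \<Longrightarrow> (fire k)\<^sup>*\<^sup>* (CC k l 0) (CC k l d)"
proof (induction d)
  case 0 then show ?case by simp
next
  case (Suc d)
  then show ?case using CC_step[OF k, of d l] by (meson Suc_leD Suc_le_lessD rtranclp_trans)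
qed

lemma CC0: "CC k l 0 = initial_config k l"
  by (rule ext) (auto simp: CC_def initial_config_def SS_def)

lemma CC_stable: assumes "k \<ge> 2" shows "stable k (CC k l l)"
  unfolding stable_def
proof
  fix w
  show "card (CC k l l w) < k"
  proof (cases "length w = l \<and> set w \<subseteq> {..<k}")
    case True
    then have "CC k l l w = {1 + val k w}" by (simp add: CC_def SS_img lessThan_Suc)
    then show ?thesis using assms by simp
  next
    case False
    then have "CC k l l w = {}" by (auto simp: CC_def)
    then show ?thesis using assms by simp
  qed
qed

lemma CC_perm: assumes "k \<ge> 2" shows "perm_of k l (CC k l l) = Z k l"
  unfolding perm_of_def Z_def
proof (rule map_cong[OF refl])
  fix p assume "p \<in> set [0..<k ^ l]"
  have v: "length (vertex_at k l p) = l" "set (vertex_at k l p) \<subseteq> {..<k}"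
    using vertex_at_len vertex_at_set assms by auto
  then have "CC k l l (vertex_at k l p) = {1 + val k (vertex_at k l p)}" by (simp add: CC_def SS_img lessThan_Suc)
  then show "the_elem (CC k l l (vertex_at k l p)) = 1 + rev_digits k l p" by (simp add: val_vertex_at)
qed

lemma Z_reachable:
  assumes "k \<ge> 2"
  shows "\<exists>c. stable_reachable k l c \<and> perm_of k l c = Z k l"
  using CC_reach[of k l l] CC0 CC_stable[OF assms] CC_perm[OF assms] assms
  unfolding stable_reachable_def by (intro exI[of _ "CC k l l"]) auto

definition recv :: "config \<Rightarrow> nat list \<Rightarrow> nat set" where
  "recv c v = {x. \<exists>u. x \<in> c (v @ u)}"

abbreviation sl :: "nat set \<Rightarrow> nat list" where
  "sl T \<equiv> sorted_list_of_set T"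

lemma app_snoc: "(\<exists>t. u @ t = v @ [j]) \<longleftrightarrow> u = v @ [j] \<or> (\<exists>t. u @ t = v)"
proof
  assume "\<exists>t. u @ t = v @ [j]"
  then obtain t where t: "u @ t = v @ [j]" by blast
  show "u = v @ [j] \<or> (\<exists>t. u @ t = v)"
  proof (cases t rule: rev_cases)
    case Nil then show ?thesis using t by simp
  next
    case (snoc t' a) then show ?thesis using t by auto
  qed
next
  assume "u = v @ [j] \<or> (\<exists>t. u @ t = v)"
  then show "\<exists>t. u @ t = v @ [j]" by (metis append.assoc append_Nil2)
qed

lemma app_snoc2: "(\<exists>t. v @ [i] @ t = v @ [j]) \<longleftrightarrow> i = j"
  by (auto simp: app_snoc[of "v @ [i]" v j, simplified])

lemma app_snoc3: "\<not> (\<exists>t. v @ [i] @ t = v)"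
  by (auto dest: arg_cong[of _ _ length])

lemma slT:
  assumes "card T = k" "k > 0"
  shows "set (sl T) = T" "length (sl T) = k" "distinct (sl T)" "finite T"
proof -
  show f: "finite T" using assms card_ge_0_finite by auto
  show "set (sl T) = T" using f by simp
  show "length (sl T) = k" using f assms by simp
  show "distinct (sl T)" by simp
qed

lemma slT_less: "i < j \<Longrightarrow> j < length (sl T) \<Longrightarrow> sl T ! i < sl T ! j"
  using sorted_wrt_nth_less[OF strict_sorted_list_of_set] by blast

lemma slT_in: "card T = k \<Longrightarrow> k > 0 \<Longrightarrow> i < k \<Longrightarrow> sl T ! i \<in> T"
  using slT[of T k] nth_mem by metis

lemma slT_ex: "card T = k \<Longrightarrow> k > 0 \<Longrightarrow> x \<in> T \<Longrightarrow> \<exists>j<k. x = sl T ! j"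
  using slT[of T k] by (metis in_set_conv_nth)

lemma slT_inj: "card T = k \<Longrightarrow> k > 0 \<Longrightarrow> i < k \<Longrightarrow> j < k \<Longrightarrow> sl T ! i = sl T ! j \<Longrightarrow> i = j"
  using slT[of T k] nth_eq_iff_index_eq by metis

definition fired :: "nat \<Rightarrow> config \<Rightarrow> nat list \<Rightarrow> nat set \<Rightarrow> config" where
  "fired k c v T = (\<lambda>w. (if w = v then c v - T else c w) \<union>
                (if (\<exists>i<k. w = v @ [i]) then {sl T ! last w} else {}))"

lemma fire_fired: "fire k c c' \<longleftrightarrow> (\<exists>v T. T \<subseteq> c v \<and> card T = k \<and> c' = fired k c v T)"
  unfolding fire_def fired_def by simp

lemma fired_recv:
  assumes disj: "\<And>v w. v \<noteq> w \<Longrightarrow> c v \<inter> c w = {}"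
    and T: "T \<subseteq> c v" "card T = k" and k: "k > 0"
  shows "recv (fired k c v T) u = (if \<exists>i<k. u = v @ [i] then recv c u \<union> {sl T ! last u} else recv c u)"
proof -
  let ?c' = "fired k c v T"
  have mem: "\<And>x w. x \<in> ?c' w \<longleftrightarrow> (if w = v then x \<in> c v \<and> x \<notin> T else x \<in> c w) \<or>
        ((\<exists>i<k. w = v @ [i]) \<and> x = sl T ! last w)"
    by (auto simp: fired_def)
  show ?thesis
  proof (rule set_eqI)
    fix x
    show "x \<in> recv ?c' u \<longleftrightarrow> x \<in> (if \<exists>i<k. u = v @ [i] then recv c u \<union> {sl T ! last u} else recv c u)"
    proof (cases "x \<in> T")
      case True
      then obtain j where j: "j < k" "x = sl T ! j" using slT_ex T k by blast
      have xc: "\<And>w. x \<in> c w \<longleftrightarrow> w = v" using True T disj by blast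
      have xc': "\<And>w. x \<in> ?c' w \<longleftrightarrow> w = v @ [j]"
      proof -
        fix w
        have "x \<in> ?c' w \<longleftrightarrow> (\<exists>i<k. w = v @ [i]) \<and> x = sl T ! last w"
          using mem[of x w] True xc by (cases "w = v") auto
        also have "\<dots> \<longleftrightarrow> w = v @ [j]"
          using j slT_inj[OF T(2) k] by auto
        finally show "x \<in> ?c' w \<longleftrightarrow> w = v @ [j]" .
      qed
      have r': "x \<in> recv ?c' u \<longleftrightarrow> (\<exists>t. u @ t = v @ [j])" by (simp add: recv_def xc')
      have r: "x \<in> recv c u \<longleftrightarrow> (\<exists>t. u @ t = v)" by (simp add: recv_def xc)
      show ?thesis
      proof (cases "\<exists>i<k. u = v @ [i]")
        case True
        then obtain i where i: "i < k" "u = v @ [i]" by blast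
        have "x \<in> recv c u \<union> {sl T ! last u} \<longleftrightarrow> i = j"
          using r i app_snoc3[of v i] j slT_inj[OF T(2) k] by auto
        moreover have "x \<in> recv ?c' u \<longleftrightarrow> i = j" using r' i app_snoc2[of v i j] by simp
        ultimately show ?thesis using True by simp
      next
        case False
        then have "u \<noteq> v @ [j]" using j by blast
        then have "x \<in> recv ?c' u \<longleftrightarrow> x \<in> recv c u" using r r' app_snoc[of u v j] by simp
        then show ?thesis unfolding if_not_P[OF False] .
      qed
    next
      case False
      have "\<And>w. x \<in> ?c' w \<longleftrightarrow> x \<in> c w"
      proof -
        fix w
        have nx: "\<not> (\<exists>i<k. x = sl T ! i)" using False slT_in[OF T(2) k] by blast
        have "\<not> ((\<exists>i<k. w = v @ [i]) \<and> x = sl T ! last w)" using nx by auto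
        then show "x \<in> ?c' w \<longleftrightarrow> x \<in> c w" using mem[of x w] False by (cases "w = v") auto
      qed
      then have "x \<in> recv ?c' u \<longleftrightarrow> x \<in> recv c u" by (simp add: recv_def)
      moreover have "\<not> (\<exists>i<k. x = sl T ! i)" using False slT_in[OF T(2) k] by blast
      ultimately show ?thesis by auto
    qed
  qed
qed

definition INV :: "nat \<Rightarrow> nat \<Rightarrow> config \<Rightarrow> (nat list \<Rightarrow> nat set set) \<Rightarrow> bool" where
"INV k N c G \<longleftrightarrow>
 (\<forall>v w. v \<noteq> w \<longrightarrow> c v \<inter> c w = {}) \<and>
 (\<forall>v. finite (c v)) \<and>
 recv c [] = {1..N} \<and>
 (\<forall>v. finite (G v)) \<and>
 (\<forall>v T. T \<in> G v \<longrightarrow> card T = k) \<and>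
 (\<forall>v T U. T \<in> G v \<longrightarrow> U \<in> G v \<longrightarrow> T \<noteq> U \<longrightarrow> T \<inter> U = {}) \<and>
 (\<forall>v. recv c v = c v \<union> \<Union>(G v)) \<and>
 (\<forall>v. c v \<inter> \<Union>(G v) = {}) \<and>
 (\<forall>v i. i < k \<longrightarrow> recv c (v @ [i]) = (\<lambda>T. sl T ! i) ` G v)"

lemma INV_init: "INV k (k ^ l) (initial_config k l) (\<lambda>_. {})"
proof -
  have r: "\<And>v. recv (initial_config k l) v = (if v = [] then {1..k ^ l} else {})"
    by (auto simp: recv_def initial_config_def)
  have c: "\<And>v. initial_config k l v = (if v = [] then {1..k ^ l} else {})"
    by (simp add: initial_config_def)
  show ?thesis unfolding INV_def
  proof (intro conjI allI impI)
    fix v w :: "nat list" assume "v \<noteq> w"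
    then show "initial_config k l v \<inter> initial_config k l w = {}" unfolding c by auto
  next
    fix v i assume "i < k"
    show "recv (initial_config k l) (v @ [i]) = (\<lambda>T. sl T ! i) ` {}" unfolding r by simp
  next
    fix v
    show "recv (initial_config k l) v = initial_config k l v \<union> \<Union> {}" unfolding r c by simp
  qed (simp_all add: r c)
qed

lemma fired_simps:
  "fired k c v T v = c v - T"
  "i < k \<Longrightarrow> fired k c v T (v @ [i]) = c (v @ [i]) \<union> {sl T ! i}"
  "u \<noteq> v \<Longrightarrow> \<not> (\<exists>i<k. u = v @ [i]) \<Longrightarrow> fired k c v T u = c u"
  by (auto simp: fired_def)

lemma INV_fired:
  assumes I: "INV k N c G" and T: "T \<subseteq> c v" "card T = k" and k: "k > 0"
  shows "INV k N (fired k c v T) (G(v := insert T (G v)))"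
proof -
  let ?c = "fired k c v T"
  let ?G = "G(v := insert T (G v))"
  note II = I[unfolded INV_def]
  have disj: "\<And>v w. v \<noteq> w \<Longrightarrow> c v \<inter> c w = {}" using II[THEN conjunct1] by blast
  have fin: "\<And>v. finite (c v)" using II[THEN conjunct2, THEN conjunct1] by blast
  have r0: "recv c [] = {1..N}" using II[THEN conjunct2, THEN conjunct2, THEN conjunct1] by blast
  have finG: "\<And>v. finite (G v)" using II[THEN conjunct2, THEN conjunct2, THEN conjunct2, THEN conjunct1] by blast
  have cardG: "\<And>v T. T \<in> G v \<Longrightarrow> card T = k" using II[THEN conjunct2, THEN conjunct2, THEN conjunct2, THEN conjunct2, THEN conjunct1] by blast
  have disG: "\<And>v T U. T \<in> G v \<Longrightarrow> U \<in> G v \<Longrightarrow> T \<noteq> U \<Longrightarrow> T \<inter> U = {}" using II[THEN conjunct2, THEN conjunct2, THEN conjunct2, THEN conjunct2, THEN conjunct2, THEN conjunct1] by blast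
  have rv: "\<And>v. recv c v = c v \<union> \<Union>(G v)" using II[THEN conjunct2, THEN conjunct2, THEN conjunct2, THEN conjunct2, THEN conjunct2, THEN conjunct2, THEN conjunct1] by blast
  have cG: "\<And>v. c v \<inter> \<Union>(G v) = {}" using II[THEN conjunct2, THEN conjunct2, THEN conjunct2, THEN conjunct2, THEN conjunct2, THEN conjunct2, THEN conjunct2, THEN conjunct1] by blast
  have ri: "\<And>v i. i < k \<Longrightarrow> recv c (v @ [i]) = (\<lambda>T. sl T ! i) ` G v" using II[THEN conjunct2, THEN conjunct2, THEN conjunct2, THEN conjunct2, THEN conjunct2, THEN conjunct2, THEN conjunct2, THEN conjunct2] by blast
  note R = fired_recv[of c T v k, OF disj T k]
  have Rv: "recv ?c v = recv c v" using R[of v] by simp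
  have Ri: "\<And>i. i < k \<Longrightarrow> recv ?c (v @ [i]) = recv c (v @ [i]) \<union> {sl T ! i}"
    using R by auto
  have Ro: "\<And>u. u \<noteq> v \<Longrightarrow> \<not> (\<exists>i<k. u = v @ [i]) \<Longrightarrow> recv ?c u = recv c u"
    using R by auto
  have Tin: "\<And>i. i < k \<Longrightarrow> sl T ! i \<in> c v" using slT_in[OF T(2) k] T(1) by blast
  have memT: "\<And>x w. x \<in> T \<Longrightarrow> x \<in> ?c w \<longleftrightarrow> (\<exists>i<k. w = v @ [i] \<and> x = sl T ! i)"
  proof -
    fix x w assume x: "x \<in> T"
    have xc: "\<And>w. x \<in> c w \<longleftrightarrow> w = v" using x T disj by blast
    show "x \<in> ?c w \<longleftrightarrow> (\<exists>i<k. w = v @ [i] \<and> x = sl T ! i)"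
    proof -
      have a: "x \<notin> (if w = v then c v - T else c w)" using x xc[of w] by auto
      have "x \<in> ?c w \<longleftrightarrow> x \<in> (if \<exists>i<k. w = v @ [i] then {sl T ! last w} else {})"
        using a unfolding fired_def by blast
      then show ?thesis by auto
    qed
  qed
  have memN: "\<And>x w. x \<notin> T \<Longrightarrow> x \<in> ?c w \<longleftrightarrow> x \<in> c w"
  proof -
    fix x w assume x: "x \<notin> T"
    have nx: "\<not> (\<exists>i<k. x = sl T ! i)" using x slT_in[OF T(2) k] by blast
    show "x \<in> ?c w \<longleftrightarrow> x \<in> c w"
    proof -
      have a: "x \<notin> (if \<exists>i<k. w = v @ [i] then {sl T ! last w} else {})" using nx by auto
      have "x \<in> ?c w \<longleftrightarrow> x \<in> (if w = v then c v - T else c w)"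
        using a unfolding fired_def by blast
      then show ?thesis using x by auto
    qed
  qed
  have D1: "\<forall>v w. v \<noteq> w \<longrightarrow> ?c v \<inter> ?c w = {}"
  proof (intro allI impI)
    fix v1 w1 :: "nat list" assume ne: "v1 \<noteq> w1"
    show "?c v1 \<inter> ?c w1 = {}"
    proof (rule ccontr)
      assume "?c v1 \<inter> ?c w1 \<noteq> {}"
      then obtain x where x: "x \<in> ?c v1" "x \<in> ?c w1" by blast
      show False
      proof (cases "x \<in> T")
        case True
        obtain i where i: "i < k" "v1 = v @ [i]" "x = sl T ! i" using memT[OF True] x(1) by blast
        obtain j where j: "j < k" "w1 = v @ [j]" "x = sl T ! j" using memT[OF True] x(2) by blast
        have "i = j" using slT_inj[OF T(2) k i(1) j(1)] i(3) j(3) by simp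
        then show False using ne i(2) j(2) by simp
      next
        case False
        then show False using x memN disj[OF ne] by blast
      qed
    qed
  qed
  have D2: "\<forall>v. finite (?c v)" using fin by (simp add: fired_def)
  have D3: "recv ?c [] = {1..N}"
  proof (cases "v = []")
    case True then show ?thesis using Rv r0 by simp
  next
    case False then have "recv ?c [] = recv c []" using Ro[of "[]"] by simp
    then show ?thesis using r0 by simp
  qed
  have D4: "\<forall>w. finite (?G w)" using finG by simp
  have D5: "\<forall>w U. U \<in> ?G w \<longrightarrow> card U = k" using cardG T(2) by auto
  have TG: "\<And>U. U \<in> G v \<Longrightarrow> T \<inter> U = {}" using T(1) cG by blast
  have D6: "\<forall>w U U'. U \<in> ?G w \<longrightarrow> U' \<in> ?G w \<longrightarrow> U \<noteq> U' \<longrightarrow> U \<inter> U' = {}"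
  proof (intro allI impI)
    fix w U U' assume a: "U \<in> ?G w" "U' \<in> ?G w" "U \<noteq> U'"
    show "U \<inter> U' = {}"
    proof (cases "w = v")
      case True
      then have "U \<in> insert T (G v)" "U' \<in> insert T (G v)" using a by auto
      then have "U = T \<or> U \<in> G v" "U' = T \<or> U' \<in> G v" by auto
      then show ?thesis using a(3) TG[of U] TG[of U'] disG[of U v U'] by (auto simp: Int_commute)
    next
      case False then show ?thesis using a disG[of U w U'] by simp
    qed
  qed
  have D7: "\<forall>u. recv ?c u = ?c u \<union> \<Union>(?G u)"
  proof
    fix u
    show "recv ?c u = ?c u \<union> \<Union>(?G u)"
    proof (cases "u = v")
      case True
      then show ?thesis using Rv rv[of v] T(1) fired_simps(1)[of k c v T] by auto
    next
      case ne: False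
      show ?thesis
      proof (cases "\<exists>i<k. u = v @ [i]")
        case True
        then obtain i where i: "i < k" "u = v @ [i]" by blast
        then show ?thesis using Ri[OF i(1)] rv[of u] fired_simps(2)[OF i(1), of c v T] ne by auto
      next
        case False
        then show ?thesis using Ro[OF ne False] rv[of u] fired_simps(3)[OF ne False] ne by auto
      qed
    qed
  qed
  have D8: "\<forall>u. ?c u \<inter> \<Union>(?G u) = {}"
  proof
    fix u
    show "?c u \<inter> \<Union>(?G u) = {}"
    proof (cases "u = v")
      case True
      then show ?thesis using cG[of v] fired_simps(1)[of k c v T] by auto
    next
      case ne: False
      show ?thesis
      proof (cases "\<exists>i<k. u = v @ [i]")
        case True
        then obtain i where i: "i < k" "u = v @ [i]" by blast
        have "sl T ! i \<notin> recv c u"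
        proof
          assume "sl T ! i \<in> recv c u"
          then obtain t where "sl T ! i \<in> c (v @ [i] @ t)" using i by (auto simp: recv_def)
          moreover have "v @ [i] @ t \<noteq> v" by simp
          ultimately show False using disj[of "v @ [i] @ t" v] Tin[OF i(1)] by blast
        qed
        then have "sl T ! i \<notin> \<Union>(G u)" using rv[of u] by blast
        then show ?thesis using cG[of u] fired_simps(2)[OF i(1), of c v T] i ne by auto
      next
        case False
        then show ?thesis using cG[of u] fired_simps(3)[OF ne False] ne by auto
      qed
    qed
  qed
  have D9: "\<forall>w i. i < k \<longrightarrow> recv ?c (w @ [i]) = (\<lambda>T. sl T ! i) ` ?G w"
  proof (intro allI impI)
    fix w i assume i: "i < k"
    show "recv ?c (w @ [i]) = (\<lambda>T. sl T ! i) ` ?G w"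
    proof (cases "w = v")
      case True
      then show ?thesis using Ri[OF i] ri[OF i, of v] by auto
    next
      case False
      have nj: "\<not> (\<exists>j<k. w @ [i] = v @ [j])" using False by auto
      have "recv ?c (w @ [i]) = recv c (w @ [i])"
      proof (cases "w @ [i] = v")
        case True then show ?thesis using Rv by simp
      next
        case ne: False show ?thesis using Ro[OF ne nj] .
      qed
      then show ?thesis using ri[OF i, of w] False by simp
    qed
  qed
  show ?thesis unfolding INV_def by (intro conjI D1 D2 D3 D4 D5 D6 D7 D8 D9)
qed

lemma reach_INV:
  assumes "(fire k)\<^sup>*\<^sup>* (initial_config k l) c" "k > 0"
  shows "\<exists>G. INV k (k ^ l) c G"
  using assms(1)
proof (induction rule: rtranclp_induct)
  case base then show ?case using INV_init by blast
next
  case (step c c')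
  then obtain G where G: "INV k (k ^ l) c G" by blast
  from step(2) obtain v T where "T \<subseteq> c v" "card T = k" "c' = fired k c v T" by (auto simp: fire_fired)
  then show ?case using INV_fired[OF G _ _ assms(2)] by blast
qed

lemma INV_facts:
  assumes "INV k N c G"
  shows INV_disj: "\<And>v w. v \<noteq> w \<Longrightarrow> c v \<inter> c w = {}"
    and INV_fin: "\<And>v. finite (c v)"
    and INV_r0: "recv c [] = {1..N}"
    and INV_finG: "\<And>v. finite (G v)"
    and INV_cardG: "\<And>v T. T \<in> G v \<Longrightarrow> card T = k"
    and INV_disG: "\<And>v T U. T \<in> G v \<Longrightarrow> U \<in> G v \<Longrightarrow> T \<noteq> U \<Longrightarrow> T \<inter> U = {}"
    and INV_rv: "\<And>v. recv c v = c v \<union> \<Union>(G v)"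
    and INV_cG: "\<And>v. c v \<inter> \<Union>(G v) = {}"
    and INV_ri: "\<And>v i. i < k \<Longrightarrow> recv c (v @ [i]) = (\<lambda>T. sl T ! i) ` G v"
proof -
  note II = assms[unfolded INV_def]
  show "\<And>v w. v \<noteq> w \<Longrightarrow> c v \<inter> c w = {}" using II[THEN conjunct1] by blast
  show "\<And>v. finite (c v)" using II[THEN conjunct2, THEN conjunct1] by blast
  show "recv c [] = {1..N}" using II[THEN conjunct2, THEN conjunct2, THEN conjunct1] by blast
  show "\<And>v. finite (G v)" using II[THEN conjunct2, THEN conjunct2, THEN conjunct2, THEN conjunct1] by blast
  show "\<And>v T. T \<in> G v \<Longrightarrow> card T = k" using II[THEN conjunct2, THEN conjunct2, THEN conjunct2, THEN conjunct2, THEN conjunct1] by blast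
  show "\<And>v T U. T \<in> G v \<Longrightarrow> U \<in> G v \<Longrightarrow> T \<noteq> U \<Longrightarrow> T \<inter> U = {}" using II[THEN conjunct2, THEN conjunct2, THEN conjunct2, THEN conjunct2, THEN conjunct2, THEN conjunct1] by blast
  show "\<And>v. recv c v = c v \<union> \<Union>(G v)" using II[THEN conjunct2, THEN conjunct2, THEN conjunct2, THEN conjunct2, THEN conjunct2, THEN conjunct2, THEN conjunct1] by blast
  show "\<And>v. c v \<inter> \<Union>(G v) = {}" using II[THEN conjunct2, THEN conjunct2, THEN conjunct2, THEN conjunct2, THEN conjunct2, THEN conjunct2, THEN conjunct2, THEN conjunct1] by blast
  show "\<And>v i. i < k \<Longrightarrow> recv c (v @ [i]) = (\<lambda>T. sl T ! i) ` G v" using II[THEN conjunct2, THEN conjunct2, THEN conjunct2, THEN conjunct2, THEN conjunct2, THEN conjunct2, THEN conjunct2, THEN conjunct2] by blast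
qed

lemma recv_sub: "recv c v \<subseteq> recv c []"
  unfolding recv_def by (auto intro: exI[of _ "v @ _"])

lemma recv_mono: "c w \<subseteq> recv c (v) \<Longrightarrow> True" by simp

lemma recv_app: "x \<in> c (v @ u) \<Longrightarrow> x \<in> recv c v"
  unfolding recv_def by blast

context
  fixes k N c G
  assumes I: "INV k N c G" and k: "k > 0"
begin

lemma finite_recv: "finite (recv c v)"
  using recv_sub[of c v] INV_r0[OF I] finite_subset by fastforce

lemma finite_group: "T \<in> G v \<Longrightarrow> finite T"
  using INV_cardG[OF I] k card_ge_0_finite by metis

lemma card_recv: "card (recv c v) = card (c v) + k * card (G v)"
proof -
  have fU: "finite (\<Union>(G v))" using INV_rv[OF I, of v] finite_recv[of v] by (metis finite_Un)
  have "card (recv c v) = card (c v) + card (\<Union>(G v))"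
    unfolding INV_rv[OF I, of v]
    by (rule card_Un_disjoint) (use INV_fin[OF I] fU INV_cG[OF I, of v] in auto)
  also have "card (\<Union>(G v)) = sum card (G v)"
    by (rule card_Union_disjoint) (auto simp: pairwise_def disjnt_def INV_disG[OF I] finite_group)
  also have "\<dots> = k * card (G v)" using INV_cardG[OF I] by simp
  finally show ?thesis .
qed

lemma group_nth_in: "T \<in> G v \<Longrightarrow> i < k \<Longrightarrow> sl T ! i \<in> T"
  using slT_in[OF INV_cardG[OF I] k] by blast

lemma group_inj: "i < k \<Longrightarrow> inj_on (\<lambda>T. sl T ! i) (G v)"
proof (rule inj_onI)
  fix T U assume i: "i < k" and TU: "T \<in> G v" "U \<in> G v" "sl T ! i = sl U ! i"
  then have "sl T ! i \<in> T \<inter> U" using group_nth_in by (metis IntI)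
  then show "T = U" using INV_disG[OF I TU(1,2)] by blast
qed

lemma card_recv_child: "i < k \<Longrightarrow> card (recv c (v @ [i])) = card (G v)"
  using INV_ri[OF I] group_inj card_image by metis

end

lemma arith_split:
  fixes a b K k :: nat
  assumes "a < k" "a + k * b = k * K"
  shows "a = 0 \<and> b = K"
proof -
  have "(a + k * b) mod k = a" using assms(1) by simp
  moreover have "(k * K) mod k = 0" by simp
  ultimately have a: "a = 0" using assms(2) by metis
  then have "k * b = k * K" using assms(2) by simp
  then show ?thesis using a assms(1) by simp
qed

lemma stable_struct:
  assumes I: "INV k (k ^ l) c G" and st: "stable k c" and k: "k \<ge> 2"
  shows "set v \<subseteq> {..<k} \<Longrightarrow> length v \<le> l \<Longrightarrow> card (recv c v) = k ^ (l - length v)"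
proof (induction v rule: rev_induct)
  case Nil
  then show ?case using INV_r0[OF I] by simp
next
  case (snoc i v)
  have k0: "k > 0" using k by simp
  have i: "i < k" using snoc.prems by auto
  have lv: "length v < l" using snoc.prems by simp
  have IH: "card (recv c v) = k ^ (l - length v)" using snoc by auto
  have e: "l - length v = Suc (l - length (v @ [i]))" using lv by simp
  have "card (c v) + k * card (G v) = k * k ^ (l - length (v @ [i]))"
    using IH card_recv[OF I k0, of v] e by simp
  then have "card (G v) = k ^ (l - length (v @ [i]))"
    using arith_split[of "card (c v)" k] st unfolding stable_def by blast
  then show ?case using card_recv_child[OF I k0 i] by simp
qed

lemma stable_inner:
  assumes I: "INV k (k ^ l) c G" and st: "stable k c" and k: "k \<ge> 2"
    and v: "set v \<subseteq> {..<k}" "length v < l"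
  shows "card (G v) = k ^ (l - Suc (length v))"
proof -
  have k0: "k > 0" using k by simp
  have e: "l - length v = Suc (l - Suc (length v))" using v by simp
  have "card (c v) + k * card (G v) = k * k ^ (l - Suc (length v))"
    using stable_struct[OF I st k v(1)] v(2) card_recv[OF I k0, of v] e by simp
  then show ?thesis using arith_split[of "card (c v)" k] st unfolding stable_def by blast
qed

lemma stable_leaf:
  assumes I: "INV k (k ^ l) c G" and st: "stable k c" and k: "k \<ge> 2"
    and v: "set v \<subseteq> {..<k}" "length v = l"
  shows "\<exists>x. c v = {x}"
proof -
  have k0: "k > 0" using k by simp
  have "card (c v) + k * card (G v) = 1"
    using stable_struct[OF I st k v(1)] v(2) card_recv[OF I k0, of v] by simp
  then have g: "card (G v) = 0" and c1: "card (c v) = 1" using k by (cases "card (G v)"; simp)+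
  then show ?thesis using card_1_singletonE by metis
qed

lemma digit_mod:
  fixes p k e l :: nat
  assumes k: "k > 0" and e: "e < l"
  shows "p mod k ^ l div k ^ e mod k = p div k ^ e mod k"
proof -
  have l: "k ^ l = k ^ e * k ^ (l - e)" using e by (simp flip: power_add)
  have A: "k ^ e > 0" using k by simp
  have "p mod k ^ l = k ^ e * (p div k ^ e mod k ^ (l - e)) + p mod k ^ e"
    unfolding l by (rule mod_mult2_eq)
  then have "p mod k ^ l div k ^ e = p div k ^ e mod k ^ (l - e)"
    using A by simp
  moreover have "k dvd k ^ (l - e)" using e by simp
  ultimately show ?thesis by (simp add: mod_mod_cancel)
qed

lemma vertex_at_mod: "k > 0 \<Longrightarrow> vertex_at k l p = vertex_at k l (p mod k ^ l)"
  unfolding vertex_at_def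
  by (rule map_cong[OF refl]) (simp add: digit_mod)

lemma vertex_at_order:
  assumes k: "k > 0"
  shows "i < j \<Longrightarrow> j < k ^ l \<Longrightarrow> \<exists>v a b r s. a < b \<and> vertex_at k l i = v @ a # r \<and> vertex_at k l j = v @ b # s"
proof (induction l arbitrary: i j)
  case 0 then show ?case by simp
next
  case (Suc l)
  have kl: "k ^ l > 0" using k by simp
  have ji: "j div k ^ l < k" using Suc.prems(2) by (simp add: less_mult_imp_div_less mult.commute)
  have ii: "i div k ^ l \<le> j div k ^ l" using Suc.prems(1) by (simp add: div_le_mono)
  have vi: "vertex_at k (Suc l) i = (i div k ^ l) # vertex_at k l (i mod k ^ l)"
    using ii ji vertex_at_mod[OF k, of l i] by (simp add: vertex_at_Suc)
  have vj: "vertex_at k (Suc l) j = (j div k ^ l) # vertex_at k l (j mod k ^ l)"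
    using ji vertex_at_mod[OF k, of l j] by (simp add: vertex_at_Suc)
  show ?case
  proof (cases "i div k ^ l = j div k ^ l")
    case True
    have "i mod k ^ l < j mod k ^ l"
    proof (rule ccontr)
      assume "\<not> i mod k ^ l < j mod k ^ l"
      then have "j = k ^ l * (j div k ^ l) + j mod k ^ l" "j mod k ^ l \<le> i mod k ^ l" by simp_all
      then have "j \<le> i" using True by (metis add_le_cancel_left div_mult_mod_eq mult.commute)
      then show False using Suc.prems(1) by simp
    qed
    moreover have "j mod k ^ l < k ^ l" using kl by simp
    ultimately obtain v a b r s where "a < b" "vertex_at k l (i mod k ^ l) = v @ a # r"
      "vertex_at k l (j mod k ^ l) = v @ b # s" using Suc.IH by blast
    then show ?thesis using vi vj True by (intro exI[of _ "(j div k ^ l) # v"]) auto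
  next
    case False
    then have "i div k ^ l < j div k ^ l" using ii by simp
    then show ?thesis using vi vj by (intro exI[of _ "[]"]) auto
  qed
qed

definition EE :: "config \<Rightarrow> nat list \<Rightarrow> nat \<Rightarrow> nat \<Rightarrow> (nat \<times> nat) set" where
  "EE c v a b = {(x, y). x \<in> recv c (v @ [a]) \<and> y \<in> recv c (v @ [b]) \<and> y < x}"

lemma EE_finite: "INV k N c G \<Longrightarrow> k > 0 \<Longrightarrow> finite (EE c v a b)"
  unfolding EE_def
  by (rule finite_subset[of _ "recv c (v @ [a]) \<times> recv c (v @ [b])"]) (auto simp: finite_recv)

lemma card_EE:
  assumes I: "INV k N c G" and k: "k > 0" and ab: "a < b" "b < k"
  shows "card (EE c v a b) \<le> card (G v) choose 2"
proof -
  define g where "g = (\<lambda>(x, y). {T \<in> G v. x \<in> T \<or> y \<in> T})"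
  have ak: "a < k" using ab by simp
  have len: "\<And>T. T \<in> G v \<Longrightarrow> length (sl T) = k"
    by (rule slT(2)[OF INV_cardG[OF I] k])
  have lt: "\<And>T. T \<in> G v \<Longrightarrow> sl T ! a < sl T ! b"
  proof -
    fix T assume "T \<in> G v"
    then show "sl T ! a < sl T ! b" using slT_less[OF ab(1), of T] len ab(2) by simp
  qed
  have uniq: "\<And>T W z. T \<in> G v \<Longrightarrow> W \<in> G v \<Longrightarrow> z \<in> T \<Longrightarrow> z \<in> W \<Longrightarrow> W = T"
    using INV_disG[OF I] by (metis IntI empty_iff)
  have desc: "\<And>x y. (x, y) \<in> EE c v a b \<Longrightarrow> \<exists>T U. T \<in> G v \<and> U \<in> G v \<and> T \<noteq> U \<and>
      x = sl T ! a \<and> y = sl U ! b \<and> g (x, y) = {T, U}"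
  proof -
    fix x y assume xy: "(x, y) \<in> EE c v a b"
    then obtain T where T: "T \<in> G v" "x = sl T ! a"
      using INV_ri[OF I ak, of v] by (auto simp: EE_def)
    obtain U where U: "U \<in> G v" "y = sl U ! b"
      using xy INV_ri[OF I ab(2), of v] by (auto simp: EE_def)
    have xT: "x \<in> T" using T group_nth_in[OF I k] ak by blast
    have yU: "y \<in> U" using U group_nth_in[OF I k] ab(2) by blast
    have TU: "T \<noteq> U"
    proof
      assume "T = U"
      then have "x < y" using lt[OF T(1)] T U by simp
      then show False using xy by (simp add: EE_def)
    qed
    have "g (x, y) = {W \<in> G v. x \<in> W \<or> y \<in> W}" by (simp add: g_def)
    also have "\<dots> = {T, U}"
    proof (rule set_eqI)
      fix W
      show "W \<in> {W \<in> G v. x \<in> W \<or> y \<in> W} \<longleftrightarrow> W \<in> {T, U}"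
        using T(1) U(1) xT yU uniq[of T W x] uniq[of U W y] by auto
    qed
    finally have "g (x, y) = {T, U}" .
    then show "\<exists>T U. T \<in> G v \<and> U \<in> G v \<and> T \<noteq> U \<and> x = sl T ! a \<and> y = sl U ! b \<and> g (x, y) = {T, U}"
      using T U TU by blast
  qed
  have maps: "g ` EE c v a b \<subseteq> {B. B \<subseteq> G v \<and> card B = 2}"
  proof
    fix B assume "B \<in> g ` EE c v a b"
    then obtain x y where "(x, y) \<in> EE c v a b" "B = g (x, y)" by auto
    then obtain T U where "T \<in> G v" "U \<in> G v" "T \<noteq> U" "B = {T, U}" using desc by metis
    then show "B \<in> {B. B \<subseteq> G v \<and> card B = 2}" by simp
  qed
  have inj: "inj_on g (EE c v a b)"
  proof (rule inj_onI)
    fix p p' assume p: "p \<in> EE c v a b" "p' \<in> EE c v a b" "g p = g p'"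
    obtain x y where xy: "p = (x, y)" by fastforce
    obtain x' y' where xy': "p' = (x', y')" by fastforce
    obtain T U where TU: "T \<in> G v" "U \<in> G v" "T \<noteq> U" "x = sl T ! a" "y = sl U ! b" "g (x, y) = {T, U}"
      using desc p(1) xy by blast
    obtain T' U' where TU': "T' \<in> G v" "U' \<in> G v" "T' \<noteq> U'" "x' = sl T' ! a" "y' = sl U' ! b" "g (x', y') = {T', U'}"
      using desc p(2) xy' by blast
    have "{T, U} = {T', U'}" using TU(6) TU'(6) p(3) xy xy' by simp
    then have "(T = T' \<and> U = U') \<or> (T = U' \<and> U = T')" by (auto simp: doubleton_eq_iff)
    then show "p = p'"
    proof
      assume "T = T' \<and> U = U'" then show ?thesis using TU TU' xy xy' by simp
    next
      assume sw: "T = U' \<and> U = T'"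
      have "y < x" "y' < x'" using p(1,2) xy xy' by (auto simp: EE_def)
      then have "sl U ! b < sl T ! a" "sl T ! b < sl U ! a" using TU TU' sw by auto
      moreover have "sl T ! a < sl T ! b" "sl U ! a < sl U ! b" using lt TU by auto
      ultimately show ?thesis by linarith
    qed
  qed
  have "card (EE c v a b) \<le> card {B. B \<subseteq> G v \<and> card B = 2}"
    by (rule card_inj_on_le[OF inj maps]) (simp add: INV_finG[OF I])
  also have "\<dots> = card (G v) choose 2" by (rule n_subsets) (rule INV_finG[OF I])
  finally show ?thesis .
qed

lemma inv_bound:
  assumes sr: "stable_reachable k l c" and k2: "k \<ge> 2"
  shows "inversions (perm_of k l c) \<le> W k l"
proof -
  have k: "k > 0" using k2 by simp
  obtain G where I: "INV k (k ^ l) c G"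
    using reach_INV[of k l c] sr k unfolding stable_reachable_def by blast
  have st: "stable k c" using sr unfolding stable_reachable_def by blast
  define N where "N = k ^ l"
  define \<pi> where "\<pi> p = the_elem (c (vertex_at k l p))" for p
  have vv: "\<And>p. set (vertex_at k l p) \<subseteq> {..<k} \<and> length (vertex_at k l p) = l"
    using vertex_at_set[OF k] vertex_at_len by blast
  have cp: "\<And>p. c (vertex_at k l p) = {\<pi> p}"
  proof -
    fix p
    obtain x where "c (vertex_at k l p) = {x}" using stable_leaf[OF I st k2] vv by blast
    then show "c (vertex_at k l p) = {\<pi> p}" by (simp add: \<pi>_def)
  qed
  have inj\<pi>: "\<And>i j. i < j \<Longrightarrow> j < N \<Longrightarrow> \<pi> i \<noteq> \<pi> j"
  proof
    fix i j assume ij: "i < j" "j < N" "\<pi> i = \<pi> j"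
    obtain v a b r s where "a < b" "vertex_at k l i = v @ a # r" "vertex_at k l j = v @ b # s"
      using vertex_at_order[OF k ij(1), of l] ij(2) unfolding N_def by blast
    then have "vertex_at k l i \<noteq> vertex_at k l j" by auto
    then have "c (vertex_at k l i) \<inter> c (vertex_at k l j) = {}" using INV_disj[OF I] by blast
    then show False using cp ij(3) by simp
  qed
  define Inv where "Inv = {(i, j). i < j \<and> j < N \<and> \<pi> j < \<pi> i}"
  have invs: "inversions (perm_of k l c) = card Inv"
    unfolding inversions_def perm_of_def Inv_def N_def \<pi>_def
    by (rule arg_cong[where f=card]) auto
  define f where "f = (\<lambda>(i, j). (\<pi> i, \<pi> j))"
  have injf: "inj_on f Inv"
  proof (rule inj_onI)
    fix p q assume pq: "p \<in> Inv" "q \<in> Inv" "f p = f q"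
    obtain i j where p: "p = (i, j)" by fastforce
    obtain i' j' where q: "q = (i', j')" by fastforce
    have e: "\<pi> i = \<pi> i'" "\<pi> j = \<pi> j'" using pq(3) p q by (auto simp: f_def)
    have lt: "i < N" "j < N" "i' < N" "j' < N" using pq p q by (auto simp: Inv_def)
    have eqi: "\<And>x y. x < N \<Longrightarrow> y < N \<Longrightarrow> \<pi> x = \<pi> y \<Longrightarrow> x = y"
    proof (rule ccontr)
      fix x y assume xy: "x < N" "y < N" "\<pi> x = \<pi> y" "x \<noteq> y"
      then have "x < y \<or> y < x" by arith
      then show False using inj\<pi>[of x y] inj\<pi>[of y x] xy by auto
    qed
    have "i = i'" using eqi[OF lt(1) lt(3) e(1)] .
    moreover have "j = j'" using eqi[OF lt(2) lt(4) e(2)] .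
    ultimately show "p = q" using p q by simp
  qed
  define V where "V d = {v. set v \<subseteq> {..<k} \<and> length v = d}" for d
  define U where "U = (\<Union>d\<in>{..<l}. \<Union>v\<in>V d. \<Union>ab\<in>P2S k. EE c v (fst ab) (snd ab))"
  have finV: "\<And>d. finite (V d)" unfolding V_def by (rule finite_lists_length_eq) simp
  have finU: "finite U" unfolding U_def
    by (intro finite_UN_I) (auto simp: finV P2S_finite EE_finite[OF I k])
  have sub: "f ` Inv \<subseteq> U"
  proof
    fix z assume "z \<in> f ` Inv"
    then obtain i j where ij: "i < j" "j < N" "\<pi> j < \<pi> i" "z = (\<pi> i, \<pi> j)"
      by (auto simp: Inv_def f_def)
    obtain v a b r s where vab: "a < b" "vertex_at k l i = v @ a # r" "vertex_at k l j = v @ b # s"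
      using vertex_at_order[OF k ij(1), of l] ij(2) unfolding N_def by blast
    have bk: "b < k" using vv[of j] vab(3) by auto
    have vV: "v \<in> V (length v)" using vv[of i] vab(2) by (auto simp: V_def)
    have vl: "length v < l" using vv[of i] vab(2) by auto
    have xi: "\<pi> i \<in> recv c (v @ [a])" using cp[of i] vab(2) recv_app[of "\<pi> i" c "v @ [a]" r] by simp
    have yj: "\<pi> j \<in> recv c (v @ [b])" using cp[of j] vab(3) recv_app[of "\<pi> j" c "v @ [b]" s] by simp
    have "z \<in> EE c v a b" using xi yj ij by (simp add: EE_def)
    moreover have "(a, b) \<in> P2S k" using vab(1) bk by (simp add: P2S_def)
    ultimately show "z \<in> U" unfolding U_def using vV vl
      by (intro UN_I[of "length v"] UN_I[of v] UN_I[of "(a, b)"]) auto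
  qed
  have cardG: "\<And>d v. d < l \<Longrightarrow> v \<in> V d \<Longrightarrow> card (G v) = k ^ (l - Suc d)"
    using stable_inner[OF I st k2] by (auto simp: V_def)
  have "inversions (perm_of k l c) = card (f ` Inv)" using invs card_image[OF injf] by simp
  also have "\<dots> \<le> card U" by (rule card_mono[OF finU sub])
  also have "\<dots> \<le> (\<Sum>d<l. card (\<Union>v\<in>V d. \<Union>ab\<in>P2S k. EE c v (fst ab) (snd ab)))"
    unfolding U_def by (rule card_UN_le) simp
  also have "\<dots> \<le> (\<Sum>d<l. \<Sum>v\<in>V d. card (\<Union>ab\<in>P2S k. EE c v (fst ab) (snd ab)))"
    by (rule sum_mono, rule card_UN_le, rule finV)
  also have "\<dots> \<le> (\<Sum>d<l. \<Sum>v\<in>V d. \<Sum>ab\<in>P2S k. card (EE c v (fst ab) (snd ab)))"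
    by (rule sum_mono, rule sum_mono, rule card_UN_le, rule P2S_finite)
  also have "\<dots> \<le> (\<Sum>d<l. \<Sum>v\<in>V d. \<Sum>ab\<in>P2S k. k ^ (l - Suc d) choose 2)"
  proof (rule sum_mono, rule sum_mono, rule sum_mono)
    fix d v ab assume d: "d \<in> {..<l}" and v: "v \<in> V d" and ab: "ab \<in> P2S k"
    have "card (EE c v (fst ab) (snd ab)) \<le> card (G v) choose 2"
      using card_EE[OF I k] ab by (auto simp: P2S_def)
    then show "card (EE c v (fst ab) (snd ab)) \<le> k ^ (l - Suc d) choose 2"
      using cardG d v by simp
  qed
  also have "\<dots> = W k l"
  proof -
    have cV: "\<And>d. card (V d) = k ^ d" unfolding V_def using card_lists_length_eq[of "{..<k}"] by simp
    show ?thesis unfolding W_def by (rule sum.cong) (auto simp: cV card_P2S)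
  qed
  finally show ?thesis .
qed

theorem theorem6p1:
  fixes k l :: nat
  assumes "k \<ge> 2"
  shows "(\<exists>c. stable_reachable k l c \<and> perm_of k l c = Z k l)
       \<and> (\<forall>c. stable_reachable k l c \<longrightarrow> inversions (perm_of k l c) \<le> inversions (Z k l))
       \<and> real (inversions (Z k l)) =
           (real k ^ (2 * l) - real l * real k ^ (l + 1) + (real l - 1) * real k ^ l) / 4"
proof -
  have IZ: "inversions (Z k l) = W k l"
    using inversions_Z card_IZ_W assms by simp
  show ?thesis using Z_reachable[OF assms] inv_bound[OF _ assms] IZ W_real by simp
qed

end
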